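(* Let $0<q<1$, $0\le p<1$, and let $\tilde P_n(x)=\sum_{k=0}^n\tilde b_{k,n}x^k$ be the orthonormal polynomials (positive leading coefficients) for the moment sequence $(\tilde s_n)$. The monic polynomials $\tilde p_n=\tilde P_n/\tilde b_{n,n}$ satisfy $\tilde p_n(x)=(x-\tilde c_n)\tilde p_{n-1}(x)-\tilde\lambda_n\tilde p_{n-2}(x)$ for $n\ge1$ ($\tilde p_{-1}=0$, $\tilde p_0=1$), where \[ \tilde c_1=\frac{(p;q)_\infty}{\Delta_1}q^{-3/2}, \] and for $n\ge1$ \[ \tilde c_{n+1}=\bigl[(1-q^{n+1})(pq^n;q)_\infty-(1-pq^{n+1})(q^n;q)_\infty\bigr]\frac{q^{-2n-3/2}}{(1-q)\Delta_{n+1}} -\bigl[(1-q^{n})(pq^{n-1};q)_\infty-(1-pq^{n})(q^{n-1};q)_\infty\bigr]\frac{q^{-2n+1/2}}{(1-q)\Delta_n}, \] \[ \tilde\lambda_{n+1}=\frac{\Delta_{n-1}\Delta_{n+1}}{\Delta_{n}^2}(1-q^{n})(1-pq^{n})q^{-4n}. \]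
   Context: For $a\in\mathbb C$ and $n\in\{0,1,\dots\}\cup\{\infty\}$, $(a;q)_n=\prod_{k=1}^n(1-aq^{k-1})$. Set $\Delta_n=(pq^n;q)_\infty-(q^n;q)_\infty$ for $n\ge0$. The moment sequence is $\tilde s_0=q^{-1/2}\bigl[1-(q;q)_\infty/(pq;q)_\infty\bigr]$ and $\tilde s_n=(p;q)_nq^{-(n+1)^2/2}$ for $n\ge1$. *)

theory Defs
  imports "HOL-Analysis.Analysis" "HOL-Computational_Algebra.Polynomial"
begin

definition qpoch :: "real \<Rightarrow> real \<Rightarrow> nat \<Rightarrow> real" where
  "qpoch a q n = (\<Prod>k<n. 1 - a * q ^ k)"

definition qpoch_inf :: "real \<Rightarrow> real \<Rightarrow> real" where
  "qpoch_inf a q = (\<Prod>k. 1 - a * q ^ k)"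

definition Delta :: "real \<Rightarrow> real \<Rightarrow> nat \<Rightarrow> real" where
  "Delta p q n = qpoch_inf (p * q ^ n) q - qpoch_inf (q ^ n) q"

definition smom :: "real \<Rightarrow> real \<Rightarrow> nat \<Rightarrow> real" where
  "smom p q n = (if n = 0
      then q powr (-1/2) * (1 - qpoch_inf q q / qpoch_inf (p * q) q)
      else qpoch p q n * q powr (- (real (n + 1))\<^sup>2 / 2))"

definition momL :: "real \<Rightarrow> real \<Rightarrow> real poly \<Rightarrow> real" where
  "momL p q P = (\<Sum>k\<le>degree P. coeff P k * smom p q k)"

end

theory Submission
  imports Defs
begin

definition AA :: "real \<Rightarrow> real \<Rightarrow> nat \<Rightarrow> real" where "AA p q n = qpoch_inf (p*q^n) q"
definition BB :: "real \<Rightarrow> nat \<Rightarrow> real" where "BB q n = qpoch_inf (q^n) q"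
definition gg :: "real \<Rightarrow> nat \<Rightarrow> nat \<Rightarrow> real" where "gg q t k = (\<Prod>j<t. 1 - q^(j+1)/q^k)"
definition bet :: "real \<Rightarrow> nat \<Rightarrow> real" where "bet q n = q powr (- (real n * real n) - real n / 2)"

lemma powr_split: fixes q :: real assumes "0 < q"
  shows "q powr (real N + 1 + 1/2) = q^N * q * q powr (1/2)"
  by (simp only: powr_add powr_realpow[OF assms] powr_one[OF less_imp_le[OF assms]])

lemma gg_Suc: "gg q (Suc t) k = gg q t k * (1 - q^(Suc t)/q^k)"
  unfolding gg_def by simp

lemma gg_Suc_Suc: assumes "q \<noteq> 0" shows "gg q (Suc t) (Suc k) = (1 - 1/q^k) * gg q t k"
proof -
  have "gg q (Suc t) (Suc k) = (\<Prod>j<Suc t. 1 - q^j/q^k)"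
    unfolding gg_def using assms by (intro prod.cong) (auto simp: field_simps)
  also have "\<dots> = (1 - 1/q^k) * (\<Prod>j<t. 1 - q^(Suc j)/q^k)"
    by (subst prod.lessThan_Suc_shift) simp
  finally show ?thesis unfolding gg_def by simp
qed

lemma gg_zero: assumes "q \<noteq> 0" "1 \<le> k" "k \<le> t" shows "gg q t k = 0"
proof -
  have "k - 1 < t" "1 - q^(k-1+1)/q^k = 0" using assms by auto
  thus ?thesis unfolding gg_def by (intro prod_zero) auto
qed

lemma bet_Suc: assumes "0 < q" shows "bet q (Suc n) = bet q n / (q^(2*n) * q * q powr (1/2))"
proof -
  have "- (real (Suc n) * real (Suc n)) - real (Suc n)/2 = (- (real n * real n) - real n/2) - (real (2*n) + 1 + 1/2)"
    by (simp add: power2_eq_square algebra_simps)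
  hence "bet q (Suc n) = q powr (- (real n * real n) - real n/2) / q powr (real (2*n) + 1 + 1/2)"
    unfolding bet_def by (simp only: powr_diff)
  also have "q powr (real (2*n) + 1 + 1/2) = q^(2*n) * q * q powr (1/2)"
    by (rule powr_split[OF assms])
  finally show ?thesis unfolding bet_def .
qed

lemma smom_Suc: assumes "0 < q" "1 \<le> k"
  shows "smom p q (Suc k) = smom p q k * (1 - p*q^k) / (q^k * q * q powr (1/2))"
proof -
  have e: "- (real (Suc k + 1))\<^sup>2 / 2 = - (real (k + 1))\<^sup>2 / 2 - (real k + 1 + 1/2)"
    by (simp add: power2_eq_square field_simps)
  have "q powr (real k + 1 + 1/2) = q^k * q * q powr (1/2)"
    by (rule powr_split[OF assms(1)])
  moreover have "qpoch p q (Suc k) = qpoch p q k * (1 - p*q^k)" unfolding qpoch_def by simp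
  moreover have "q powr (- (real (Suc k + 1))\<^sup>2 / 2) = q powr (- (real (k + 1))\<^sup>2 / 2) / q powr (real k + 1 + 1/2)"
    unfolding e by (simp only: powr_diff)
  ultimately show ?thesis using assms unfolding smom_def
    by simp
qed

lemma W_sq: fixes q :: real assumes "0 < q" shows "q powr (1/2) * q powr (1/2) = q"
  using assms by (simp add: powr_add[symmetric])

lemma cstep:
  fixes p q :: real and c :: "nat \<Rightarrow> real"
  assumes q0: "0 < q"
  and cdef: "c = (\<lambda>n. if n = 1 then qpoch_inf p q / Delta p q 1 * q powr (-3/2)
                       else ((1 - q ^ n) * qpoch_inf (p * q ^ (n - 1)) q
                               - (1 - p * q ^ n) * qpoch_inf (q ^ (n - 1)) q)
                            * q powr (- 2 * real (n - 1) - 3/2) / ((1 - q) * Delta p q n)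
                          - ((1 - q ^ (n - 1)) * qpoch_inf (p * q ^ (n - 2)) q
                               - (1 - p * q ^ (n - 1)) * qpoch_inf (q ^ (n - 2)) q)
                            * q powr (- 2 * real (n - 1) + 1/2) / ((1 - q) * Delta p q (n - 1)))"
  shows "c (Suc (Suc m)) = ((1-q*q*q^m)*AA p q (Suc m) - (1-p*q*q*q^m)*BB q (Suc m))*(1/(q^m*q^m*q^3*q powr (1/2)))/((1-q)*Delta p q (Suc (Suc m)))
     - ((1-q*q^m)*AA p q m - (1-p*q*q^m)*BB q m)*(1/(q^m*q^m*q*q powr (1/2)))/((1-q)*Delta p q (Suc m))"
proof -
  have sq: "q^(2*m) = q^m*q^m" by (simp add: mult_2 power_add)
  have p1: "q powr (- 2 * real (Suc m) - 3/2) = 1/(q^m*q^m*q^3*q powr (1/2))"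
  proof -
    have "q powr (- 2 * real (Suc m) - 3/2) = 1 / q powr (real (2*m) + 1 + 1/2 + 2)"
      using q0 by (simp add: powr_minus_divide[symmetric] algebra_simps)
    also have "q powr (real (2*m) + 1 + 1/2 + 2) = q^(2*m)*q*q powr (1/2) * q^2"
      using q0 by (simp only: powr_add powr_split powr_realpow) simp
    finally show ?thesis unfolding sq by (simp add: power2_eq_square power3_eq_cube mult_ac)
  qed
  have p2: "q powr (- 2 * real (Suc m) + 1/2) = 1/(q^m*q^m*q*q powr (1/2))"
  proof -
    have ex: "- 2 * real (Suc m) + 1/2 = - (real (2*m) + 1 + 1/2)" by simp
    have "q powr (- 2 * real (Suc m) + 1/2) = 1 / q powr (real (2*m) + 1 + 1/2)"
      unfolding ex by (rule powr_minus_divide)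
    also have "q powr (real (2*m) + 1 + 1/2) = q^(2*m)*q*q powr (1/2)"
      using q0 by (rule powr_split)
    finally show ?thesis unfolding sq by (simp add: mult_ac)
  qed
  have n1: "(Suc (Suc m) = 1) = False" by simp
  have d1: "Suc (Suc m) - 1 = Suc m" by simp
  have d2: "Suc (Suc m) - 2 = m" by simp
  show ?thesis unfolding cdef AA_def BB_def
    by (simp only: n1 if_False d1 d2 p1 p2 power_Suc mult.assoc)
qed

definition TT :: "real \<Rightarrow> real \<Rightarrow> nat \<Rightarrow> nat \<Rightarrow> real" where
  "TT p q n k = (if n = 0 then smom p q k else if k = 0 then 0 else
     smom p q k * gg q (n-1) k * (-1)^(n+1) * bet q n * (1/q^k - (AA p q n - p * BB q n)/Delta p q n))"

lemma hX:
  fixes p q :: real assumes q0: "0 < q"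
  shows "TT p q (Suc (Suc (Suc t))) (Suc j) =
    smom p q (Suc j) * (gg q t (Suc j) * (1 - q^(Suc t)/q^(Suc j)) * (1 - q*q^(Suc t)/q^(Suc j))) * (-1)^(Suc t + 1)
    * (bet q (Suc t) / ((q^(Suc t))^4 * q^4 * q powr (1/2) * q powr (1/2)))
    * (1/q^(Suc j) - (AA p q (Suc (Suc (Suc t))) - p * BB q (Suc (Suc (Suc t))))/Delta p q (Suc (Suc (Suc t))))"
proof -
  let ?W = "q powr (1/2)"
  have W0: "?W \<noteq> 0" using q0 by simp
  have b: "bet q (Suc (Suc (Suc t))) = bet q (Suc t) / ((q^(Suc t))^4 * q^4 * ?W * ?W)"
    unfolding bet_Suc[OF q0] using q0 W0 by (simp add: field_simps power_add power_mult mult_2 power_Suc eval_nat_numeral)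
  have g: "gg q (Suc (Suc t)) (Suc j) = gg q t (Suc j) * (1 - q^(Suc t)/q^(Suc j)) * (1 - q*q^(Suc t)/q^(Suc j))"
    unfolding gg_Suc by simp
  have sg: "(-1::real)^(Suc (Suc (Suc t)) + 1) = (-1)^(Suc t + 1)" by simp
  have z: "(Suc (Suc (Suc t)) = 0) = False" "(Suc j = 0) = False" by simp_all
  show ?thesis by (simp only: TT_def z if_False diff_Suc_1 b g sg)
qed

lemma qpi_conv:
  fixes a q :: real assumes "0 < q" "q < 1"
  shows "convergent_prod (\<lambda>k. 1 - a * q ^ k)"
proof -
  have "summable (\<lambda>k. \<bar>a\<bar> * q ^ k)"
    using assms by (intro summable_mult summable_geometric) auto
  hence "summable (\<lambda>i. norm ((1 - a * q ^ i) - 1))"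
    using assms by (simp add: abs_mult power_abs)
  hence "abs_convergent_prod (\<lambda>k. 1 - a * q ^ k)"
    by (rule summable_imp_abs_convergent_prod)
  thus ?thesis by (rule abs_convergent_prod_imp_convergent_prod)
qed

lemma qpi_step:
  fixes a q :: real assumes "0 < q" "q < 1"
  shows "qpoch_inf a q = (1 - a) * qpoch_inf (a * q) q"
proof -
  have "(\<lambda>k. 1 - a * q ^ k) has_prod ((\<Prod>k<1. 1 - a * q ^ k) * (\<Prod>k. 1 - a * q ^ (k + 1)))"
    by (rule has_prod_ignore_initial_segment'[OF qpi_conv[OF assms]])
  hence "(\<Prod>k<1. 1 - a * q ^ k) * (\<Prod>k. 1 - a * q ^ (k + 1)) = qpoch_inf a q"
    unfolding qpoch_inf_def by (rule has_prod_unique)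
  hence "qpoch_inf a q = (1 - a) * (\<Prod>k. 1 - a * q ^ (k + 1))" by simp
  also have "(\<lambda>k. 1 - a * q ^ (k + 1)) = (\<lambda>k. 1 - (a*q) * q ^ k)"
    by (auto simp: algebra_simps)
  finally show ?thesis unfolding qpoch_inf_def by simp
qed

lemma qpi_nonneg:
  fixes a q :: real assumes "0 < q" "q < 1" "\<And>k. 0 \<le> 1 - a * q ^ k"
  shows "0 \<le> qpoch_inf a q"
proof -
  have "(\<lambda>n. \<Prod>i<n. 1 - a * q ^ i) \<longlonglongrightarrow> qpoch_inf a q"
    unfolding qpoch_inf_def using convergent_prod_LIMSEQ[OF qpi_conv[OF assms(1,2)]]
    by (simp add: LIMSEQ_lessThan_iff_atMost)
  moreover have "\<And>n. 0 \<le> (\<Prod>i<n. 1 - a * q ^ i)"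
    using assms(3) by (intro prod_nonneg) auto
  ultimately show ?thesis by (intro LIMSEQ_le_const) auto
qed

lemma qpi_pos:
  fixes a q :: real assumes "0 < q" "q < 1" "\<And>k. 0 < 1 - a * q ^ k"
  shows "0 < qpoch_inf a q"
proof -
  have "qpoch_inf a q \<noteq> 0" unfolding qpoch_inf_def
    using assms by (intro prodinf_nonzero qpi_conv) (auto simp: less_le)
  moreover have "0 \<le> qpoch_inf a q" using assms by (intro qpi_nonneg) (auto simp: less_imp_le)
  ultimately show ?thesis by simp
qed

lemma qpi_le:
  fixes a b q :: real assumes "0 < q" "q < 1" "\<And>k. 0 \<le> 1 - a * q ^ k" "\<And>k. 1 - a * q ^ k \<le> 1 - b * q ^ k"
  shows "qpoch_inf a q \<le> qpoch_inf b q"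
  unfolding qpoch_inf_def using assms
  by (intro prodinf_le[OF convergent_prod_has_prod[OF qpi_conv[OF assms(1,2)]] convergent_prod_has_prod[OF qpi_conv[OF assms(1,2)]]]) auto

lemma e3a: fixes q W Q U D1 M s G \<sigma> \<beta> :: real
  assumes nz: "W \<noteq> 0" "Q \<noteq> 0" "U \<noteq> 0" "q \<noteq> 0" "D1 \<noteq> 0"
  shows "s*(G*(1-Q/U))*(-\<sigma>)*(\<beta>/(Q*Q*q*W))*(1/U - M/D1)
     = s*G*(-\<sigma>)*\<beta>*((U-Q)*(D1 - U*M)) / (U^2*Q*Q*q*W*D1)"
  using nz apply (simp add: field_simps) by algebra

lemma e3b: fixes q W Q E D2 D1 N1 N2 :: real
  assumes nz: "W \<noteq> 0" "Q \<noteq> 0" "q \<noteq> 0" "E \<noteq> 0" "D2 \<noteq> 0" "D1 \<noteq> 0"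
  shows "N2*(1/(Q*Q*q^3*W))/(E*D2) - N1*(1/(Q*Q*q*W))/(E*D1)
     = (N2*D1 - q*q*D2*N1) / (Q*Q*q^3*W*E*D2*D1)"
  using nz apply (simp add: field_simps) by algebra

lemma e3c: fixes q W Q U E D2 D1 X Y K :: real
  assumes qW: "q = W*W" and nz: "W \<noteq> 0" "Q \<noteq> 0" "U \<noteq> 0" "E \<noteq> 0" "D2 \<noteq> 0" "D1 \<noteq> 0"
  shows "(X / (Q*Q*q^3*W*E*D2*D1)) * (K * Y / (U^2*Q*Q*q*W*D1)) * (U^3*Q^4*q^5*E*D2*D1^2)
     = K * (U * Y * X)"
  using nz unfolding qW apply (simp add: field_simps) by algebra

lemma alg5_poly:
  fixes p q Q U A B A1 B1 A0 B0 :: real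
  assumes "A1 = (1-p*q*Q)*A" "B1 = (1-q*Q)*B" "A0 = (1-p*Q)*A1" "B0 = (1-Q)*B1"
  shows "(U-Q)*(U-q*Q)*((A-B)-U*(A-p*B))*(1-q)*(A1-B1)^2 =
   -(1-p*U)*(U-1)*((A1-B1)-q*U*(A1-p*B1))*Q^2*q*(1-q)*(A-B)*(A1-B1)
   + (U-Q)*((A1-B1)-U*(A1-p*B1))*U*((A1-B1)*((1-q*q*Q)*A1-(1-p*q*q*Q)*B1)-q*q*(A-B)*((1-q*Q)*A0-(1-p*q*Q)*B0))
   - (A-B)*(1-q*Q)*(1-p*q*Q)*((A0-B0)-U*(A0-p*B0))*U^2*q*(1-q)*(A-B)"
  unfolding assms by algebra

lemma alg5:
  fixes p q W Q U A B A1 B1 A0 B0 D2 D1 D0 E N1 N2 s G \<sigma> \<beta> :: real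
  assumes qW: "q = W*W" and nz: "W \<noteq> 0" "Q \<noteq> 0" "U \<noteq> 0" "E \<noteq> 0"
    and AB: "A1 = (1-p*q*Q)*A" "B1 = (1-q*Q)*B" "A0 = (1-p*Q)*A1" "B0 = (1-Q)*B1"
    and Dd: "D2 = A - B" "D1 = A1 - B1" "D0 = A0 - B0" "E = 1 - q"
    and N: "N2 = (1-q*q*Q)*A1 - (1-p*q*q*Q)*B1" "N1 = (1-q*Q)*A0 - (1-p*q*Q)*B0"
    and D: "D2 \<noteq> 0" "D1 \<noteq> 0" "D0 \<noteq> 0"
  shows "s*(G*(1-Q/U)*(1-q*Q/U))*\<sigma>*(\<beta>/(Q^4*q^4*W*W))*(1/U - (A-p*B)/D2) =
     (s*(1-p*U)/(U*q*W))*((1-1/U)*G)*(-\<sigma>)*(\<beta>/(Q*Q*q*W))*(1/(q*U) - (A1-p*B1)/D1)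
   - (N2*(1/(Q*Q*q^3*W))/(E*D2) - N1*(1/(Q*Q*q*W))/(E*D1))
     * (s*(G*(1-Q/U))*(-\<sigma>)*(\<beta>/(Q*Q*q*W))*(1/U - (A1-p*B1)/D1))
   - (D0*D2/D1^2*(1-q*Q)*(1-p*q*Q)*(1/(Q^4*q^4)))*(s*G*\<sigma>*\<beta>*(1/U - (A0-p*B0)/D0))"
  (is "?X = ?Y2 - ?C * ?Y3 - ?Lm * ?Y4")
proof -
  define L where "L = U^3*Q^4*q^5*E*D2*D1^2"
  have q0: "q \<noteq> 0" using qW nz by simp
  have L0: "L \<noteq> 0" unfolding L_def using nz D q0 by simp
  have e1: "?X * L = s*G*\<sigma>*\<beta>*((U-Q)*(U-q*Q)*(D2-U*(A-p*B))*E*D1^2)"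
    unfolding L_def using nz D unfolding qW apply (simp add: field_simps) by algebra
  have e2: "?Y2 * L = s*G*\<sigma>*\<beta>*(-(1-p*U)*(U-1)*(D1-q*U*(A1-p*B1))*Q^2*q*E*D2*D1)"
    unfolding L_def using nz D unfolding qW apply (simp add: field_simps) by algebra
  have "?C * ?Y3 * L = (s*G*(-\<sigma>)*\<beta>) * (U * ((U-Q)*(D1 - U*(A1-p*B1))) * (N2*D1 - q*q*D2*N1))"
    unfolding e3a[OF nz(1,2,3) q0 D(2)] e3b[OF nz(1,2) q0 nz(4) D(1,2)] L_def
    by (rule e3c[OF qW nz(1-4) D(1,2)])
  hence e3: "?C * ?Y3 * L = s*G*\<sigma>*\<beta>*(-(U-Q)*(D1-U*(A1-p*B1))*U*(D1*N2-q*q*D2*N1))"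
    by (simp add: algebra_simps)
  have e4: "(?Lm * ?Y4) * L = s*G*\<sigma>*\<beta>*(D2*(1-q*Q)*(1-p*q*Q)*(D0-U*(A0-p*B0))*U^2*q*E*D2)"
    unfolding L_def using nz D unfolding qW apply (simp add: field_simps) by algebra
  have P: "(U-Q)*(U-q*Q)*(D2-U*(A-p*B))*E*D1^2 =
   -(1-p*U)*(U-1)*(D1-q*U*(A1-p*B1))*Q^2*q*E*D2*D1
   + (U-Q)*(D1-U*(A1-p*B1))*U*(D1*N2-q*q*D2*N1)
   - D2*(1-q*Q)*(1-p*q*Q)*(D0-U*(A0-p*B0))*U^2*q*E*D2"
    unfolding Dd N by (rule alg5_poly[OF AB])
  have comb: "\<And>K a1 a2 t3 t4 :: real. a1 = a2 + t3 - t4 \<Longrightarrow> K*a1 = K*a2 - K*(-t3) - K*t4"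
    by algebra
  have "?X * L = ?Y2 * L - ?C * ?Y3 * L - ?Lm * ?Y4 * L"
    unfolding e1 e2 e3 e4 using P by algebra
  hence "?X * L = (?Y2 - ?C * ?Y3 - ?Lm * ?Y4) * L"
    by (simp only: left_diff_distrib)
  thus ?thesis using L0 by (metis mult_cancel_right)
qed

lemma AA_Suc: assumes "0 < q" "q < 1" shows "AA p q n = (1 - p*q^n) * AA p q (Suc n)"
proof -
  have e: "p * q ^ n * q = p * q ^ Suc n" by (simp add: mult_ac)
  show ?thesis unfolding AA_def using qpi_step[OF assms, of "p*q^n"] unfolding e .
qed

lemma BB_Suc: assumes "0 < q" "q < 1" shows "BB q n = (1 - q^n) * BB q (Suc n)"
proof -
  have e: "q ^ n * q = q ^ Suc n" by (simp add: mult_ac)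
  show ?thesis unfolding BB_def using qpi_step[OF assms, of "q^n"] unfolding e .
qed

lemma Delta_AB: "Delta p q n = AA p q n - BB q n"
  unfolding Delta_def AA_def BB_def by simp

lemma Delta_pos: assumes q0: "0 < q" and q1: "q < 1" and p0: "0 \<le> p" and p1: "p < 1"
  shows "0 < Delta p q n"
proof -
  have qk: "\<And>k. q^k \<le> 1" "\<And>k. 0 < q^k" using q0 q1 by (auto intro: power_le_one)
  have pk: "\<And>k. p * q^k < 1"
  proof -
    fix k show "p * q^k < 1" using qk[of k] p0 p1 by (metis le_less_trans mult_left_le mult_le_one less_imp_le mult_less_cancel_right2 mult.commute) 
  qed
  have Apos: "0 < AA p q (Suc n)" unfolding AA_def
  proof (rule qpi_pos[OF q0 q1])
    fix k have "p*q^(Suc n + k) < 1" by (rule pk)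
    thus "0 < 1 - p * q ^ Suc n * q ^ k" by (simp add: power_add mult.assoc)
  qed
  have Bnn: "0 \<le> BB q (Suc n)" unfolding BB_def
  proof (rule qpi_nonneg[OF q0 q1])
    fix k have "q^(Suc n + k) \<le> 1" by (rule qk)
    thus "0 \<le> 1 - q ^ Suc n * q ^ k" by (simp add: power_add)
  qed
  have BA: "BB q (Suc n) \<le> AA p q (Suc n)" unfolding BB_def AA_def
  proof (rule qpi_le[OF q0 q1])
    fix k show "0 \<le> 1 - q ^ Suc n * q ^ k" using qk(1)[of "Suc n + k"] by (simp add: power_add)
    show "1 - q ^ Suc n * q ^ k \<le> 1 - p * q ^ Suc n * q ^ k"
    proof -
      have "p * q^(Suc n + k) \<le> 1 * q^(Suc n + k)" using qk(2)[of "Suc n + k"] p1 by (intro mult_right_mono) auto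
      thus ?thesis by (simp add: power_add mult.assoc)
    qed
  qed
  have "Delta p q n = (1 - p*q^n) * AA p q (Suc n) - (1 - q^n) * BB q (Suc n)"
    unfolding Delta_AB using AA_Suc[OF q0 q1] BB_Suc[OF q0 q1] by metis
  also have "\<dots> \<ge> (1 - p*q^n) * AA p q (Suc n) - (1 - q^n) * AA p q (Suc n)"
    using BA qk by (intro diff_left_mono mult_left_mono) auto
  also have "(1 - p*q^n) * AA p q (Suc n) - (1 - q^n) * AA p q (Suc n) = (1-p)*q^n*AA p q (Suc n)"
    by (simp add: algebra_simps)
  finally show ?thesis using Apos qk p1 by (smt (verit) mult_pos_pos)
qed

lemma alg0:
  fixes p q W A0 A1 B1 D1 :: real
  assumes qW: "q = W*W" and nz: "W \<noteq> 0" "A1 \<noteq> 0" "D1 \<noteq> 0"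
    and r: "A0 = (1-p)*A1" "D1 = A1 - B1"
  shows "(1-p)/(q*q) - A0/D1*(1/(q*W))*((1/W)*(1 - B1/A1)) = 0"
  using nz unfolding qW r by (simp add: field_simps)

lemma alg1:
  fixes p q W U A0 A1 B1 D1 s :: real
  assumes qW: "q = W*W" and nz: "W \<noteq> 0" "U \<noteq> 0" "D1 \<noteq> 0"
    and r: "A0 = (1-p)*A1" "D1 = A1 - B1"
  shows "s*(1-p*U)/(U*q*W) - A0/D1*(1/(q*W))* s = s*(1/(q*W))*(1/U - (A1-p*B1)/D1)"
  using nz unfolding qW r by (simp add: field_simps)

lemma alg2:
  fixes p q W A2 B2 A1 B1 A0 D2 D1 D0 :: real
  assumes qW: "q = W*W" and nz: "W \<noteq> 0" "A1 \<noteq> 0" "D1 \<noteq> 0" "D2 \<noteq> 0"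
    and r: "A1 = (1-p*q)*A2" "B1 = (1-q)*B2" "A0 = (1-p)*A1" "D2 = A2 - B2" "D1 = A1 - B1" "D0 = A0"
  shows "(1-p)/(q*q) * (1/(q*W)) * (1/q - (A1-p*B1)/D1) = (D0*D2/D1^2*(1-q)*(1-p*q)*(1/q^4)) * ((1/W)*(1 - B1/A1))"
proof -
  have key: "D1 - q*(A1-p*B1) = D2*(1-q)*(1-p*q)" unfolding r(5) unfolding r(1,2,4) by algebra
  have b: "1 - B1/A1 = D1/A1" using nz(2) unfolding r(5) by (simp add: field_simps)
  have q0: "q \<noteq> 0" using qW nz by simp
  have "(1-p)/(q*q) * (1/(q*W)) * (1/q - (A1-p*B1)/D1) = (1-p)*(D1 - q*(A1-p*B1))/(q^4*W*D1)"
    using nz q0 by (simp add: field_simps power4_eq_xxxx)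
  also have "\<dots> = (1-p)*(D2*(1-q)*(1-p*q))/(q^4*W*D1)" unfolding key ..
  also have "\<dots> = (D0*D2/D1^2*(1-q)*(1-p*q)*(1/q^4)) * ((1/W)*(D1/A1))"
    unfolding r(6) r(3) using nz q0 by (simp add: field_simps power2_eq_square)
  finally show ?thesis unfolding b .
qed

lemma cc_gen: fixes q W E D2 D1 N1 N2 :: real
  assumes nz: "W \<noteq> 0" "q \<noteq> 0" "E \<noteq> 0" "D2 \<noteq> 0" "D1 \<noteq> 0"
  shows "N2*(1/(q^3*W))/(E*D2) - N1*(1/(q*W))/(E*D1) = (N2*D1 - q*q*N1*D2)/(q^3*W*E*D2*D1)"
  using nz apply (simp add: field_simps) by algebra

lemma pr_gen: fixes q W E U D2 D1 X Y K :: real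
  assumes nz: "W \<noteq> 0" "q \<noteq> 0" "E \<noteq> 0" "D2 \<noteq> 0" "D1 \<noteq> 0" "U \<noteq> 0"
  shows "(X/(q^3*W*E*D2*D1)) * (K*Y/(U*q*W*D1)) * (U^2*q^5*W*W*E*D2*D1^2) = K*(U*q*Y*X)"
  using nz apply (simp add: field_simps power2_eq_square) by algebra

lemma alg3:
  fixes p q W U A2 B2 A1 B1 A0 B0 D2 D1 D0 s :: real
  assumes qW: "q = W*W" and nz: "W \<noteq> 0" "U \<noteq> 0" "1 - q \<noteq> 0" "D1 \<noteq> 0" "D2 \<noteq> 0"
    and r: "A1 = (1-p*q)*A2" "B1 = (1-q)*B2" "A0 = (1-p)*A1" "B0 = 0" "D2 = A2 - B2" "D1 = A1 - B1" "D0 = A0 - B0"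
  shows "s*(1 - q/U)*(-1)*(1/(q^4*W*W))*(1/U - (A2-p*B2)/D2)
    = (s*(1-p*U)/(U*q*W))*(1/(q*W))*(1/(q*U) - (A1-p*B1)/D1)
     - (((1-q*q)*A1 - (1-p*q*q)*B1)*(1/(q^3*W))/((1-q)*D2) - ((1-q)*A0 - (1-p*q)*B0)*(1/(q*W))/((1-q)*D1))
       * (s*(1/(q*W))*(1/U - (A1-p*B1)/D1))
     - (D0*D2/D1^2*(1-q)*(1-p*q)*(1/q^4))* s"
  (is "?X = ?Y2 - ?C * ?Y3 - ?Lm * ?s")
proof -
  have q0: "q \<noteq> 0" using qW nz by simp
  define L where "L = U^2*q^5*W*W*(1-q)*D2*D1^2"
  have L0: "L \<noteq> 0" unfolding L_def using nz q0 by simp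
  have e1: "(s*(1 - q/U)*(-1)*(1/(q^4*W*W))*(1/U - (A2-p*B2)/D2)) * L = s*(-(U-q)*(D2-U*(A2-p*B2))*q*(1-q)*D1^2)"
    unfolding L_def using nz q0 apply (simp add: field_simps) by algebra
  have e2: "((s*(1-p*U)/(U*q*W))*(1/(q*W))*(1/(q*U) - (A1-p*B1)/D1)) * L = s*((1-p*U)*(D1 - q*U*(A1-p*B1))*q*q*(1-q)*D2*D1)"
    unfolding L_def using nz q0 unfolding qW apply (simp add: field_simps) by algebra
  have y3: "s*(1/(q*W))*(1/U - (A1-p*B1)/D1) = s*(D1 - U*(A1-p*B1))/(U*q*W*D1)"
    using nz q0 by (simp add: field_simps)
  have cc: "((1-q*q)*A1 - (1-p*q*q)*B1)*(1/(q^3*W))/((1-q)*D2) - ((1-q)*A0 - (1-p*q)*B0)*(1/(q*W))/((1-q)*D1)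
     = (((1-q*q)*A1 - (1-p*q*q)*B1)*D1 - q*q*((1-q)*A0 - (1-p*q)*B0)*D2)/(q^3*W*(1-q)*D2*D1)"
    by (rule cc_gen) (use nz q0 in auto)
  have pr: "\<And>X Y K. (X/(q^3*W*(1-q)*D2*D1)) * (K*Y/(U*q*W*D1)) * L = K*(U*q*Y*X)"
    unfolding L_def by (rule pr_gen) (use nz q0 in auto)
  have e3: "((((1-q*q)*A1 - (1-p*q*q)*B1)*(1/(q^3*W))/((1-q)*D2) - ((1-q)*A0 - (1-p*q)*B0)*(1/(q*W))/((1-q)*D1))
       * (s*(1/(q*W))*(1/U - (A1-p*B1)/D1))) * L
     = s*(U*q*(D1-U*(A1-p*B1))*(((1-q*q)*A1 - (1-p*q*q)*B1)*D1 - q*q*((1-q)*A0 - (1-p*q)*B0)*D2))"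
    unfolding y3 cc pr by (simp only: mult_ac)
  have e4: "((D0*D2/D1^2*(1-q)*(1-p*q)*(1/q^4))* s) * L = s*(D0*D2*(1-q)*(1-p*q)*U^2*q*(W*W)*(1-q)*D2)"
    unfolding L_def using nz q0 apply (simp add: field_simps) by algebra
  have P: "-(U-q)*(D2-U*(A2-p*B2))*q*(1-q)*D1^2 = (1-p*U)*(D1 - q*U*(A1-p*B1))*q*q*(1-q)*D2*D1
     - U*q*(D1-U*(A1-p*B1))*(((1-q*q)*A1 - (1-p*q*q)*B1)*D1 - q*q*((1-q)*A0 - (1-p*q)*B0)*D2)
     - D0*D2*(1-q)*(1-p*q)*U^2*q*q*(1-q)*D2"
    unfolding r by algebra
  have comb: "\<And>x1 x2 x3 x4 s :: real. x1 = x2 - x3 - x4 \<Longrightarrow> s*x1 = s*x2 - s*x3 - s*x4"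
    by (simp add: right_diff_distrib)
  have "?X * L = ?Y2 * L - ?C * ?Y3 * L - ?Lm * ?s * L"
    unfolding e1 e2 e3 e4 qW[symmetric] by (rule comb[OF P])
  hence "?X * L = (?Y2 - ?C * ?Y3 - ?Lm * ?s) * L"
    by (simp only: left_diff_distrib)
  thus ?thesis using L0 by (metis mult_cancel_right)
qed

lemma momL_upto: assumes "degree P \<le> N"
  shows "momL p q P = (\<Sum>k\<le>N. coeff P k * smom p q k)"
  unfolding momL_def using assms
  by (intro sum.mono_neutral_left) (auto simp: coeff_eq_0)

lemma momL_add: "momL p q (P + R) = momL p q P + momL p q R"
proof -
  let ?N = "max (degree P) (degree R)"
  have "degree (P + R) \<le> ?N" by (rule degree_add_le) auto
  thus ?thesis
    by (simp add: momL_upto[of _ ?N] momL_upto[of P ?N] momL_upto[of R ?N] sum.distrib algebra_simps)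
qed

lemma momL_smult: "momL p q (smult a P) = a * momL p q P"
  unfolding momL_def by (simp add: sum_distrib_left mult.assoc)

lemma momL_minus: "momL p q (- P) = - momL p q P"
  using momL_smult[of p q "-1" P] by simp

lemma momL_diff: "momL p q (P - R) = momL p q P - momL p q R"
  using momL_add[of p q P "-R"] momL_minus[of p q R] by simp

lemma momL_zero: "momL p q 0 = 0"
  unfolding momL_def by simp

lemma momL_sum: "finite I \<Longrightarrow> momL p q (\<Sum>i\<in>I. f i) = (\<Sum>i\<in>I. momL p q (f i))"
  by (induction I rule: finite_induct) (simp_all add: momL_zero momL_add)

lemma momL_monom: "momL p q (monom a k) = a * smom p q k"
proof -
  have "momL p q (monom a k) = (\<Sum>j\<le>k. coeff (monom a k) j * smom p q j)"
    by (rule momL_upto) (rule degree_monom_le)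
  also have "\<dots> = (\<Sum>j\<le>k. if j = k then a * smom p q j else 0)"
    by (intro sum.cong) (auto simp: coeff_monom)
  finally show ?thesis by simp
qed

lemma momL_shift:
  "momL p q (monom 1 k * ([:-a, 1:] * X - smult b Y)) =
     momL p q (monom 1 (Suc k) * X) - a * momL p q (monom 1 k * X) - b * momL p q (monom 1 k * Y)"
proof -
  have "monom 1 k * ([:-a, 1:] * X - smult b Y) = monom 1 (Suc k) * X - smult a (monom 1 k * X) - smult b (monom 1 k * Y)"
    by (simp add: monom_Suc algebra_simps smult_add_left mult_pCons_left)
  thus ?thesis by (simp add: momL_diff momL_smult)
qed

lemma orth_monoms:
  assumes "\<And>k. k < n \<Longrightarrow> momL p q (monom 1 k * X) = 0" and "degree R < n"
  shows "momL p q (R * X) = 0"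
proof -
  have "R * X = (\<Sum>i\<le>degree R. smult (coeff R i) (monom 1 i * X))"
  proof -
    have "R * X = (\<Sum>i\<le>degree R. monom (coeff R i) i) * X" by (simp add: poly_as_sum_of_monoms)
    also have "\<dots> = (\<Sum>i\<le>degree R. monom (coeff R i) i * X)"
      by (rule sum_distrib_right)
    also have "\<dots> = (\<Sum>i\<le>degree R. smult (coeff R i) (monom 1 i * X))"
    proof (intro sum.cong refl)
      fix i
      have "monom (coeff R i) i * X = smult (coeff R i) (monom 1 i) * X"
        by (subst smult_monom) simp
      also have "\<dots> = smult (coeff R i) (monom 1 i * X)"
        by (rule mult_smult_left)
      finally show "monom (coeff R i) i * X = smult (coeff R i) (monom 1 i * X)" .
    qed
    finally show ?thesis .
  qed
  thus ?thesis using assms by (simp add: momL_sum momL_smult)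
qed

lemma span:
  fixes P :: "nat \<Rightarrow> real poly"
  assumes deg: "\<And>n. degree (P n) = n" and lc: "\<And>n. lead_coeff (P n) \<noteq> 0"
  shows "degree R \<le> N \<Longrightarrow> \<exists>a. R = (\<Sum>m\<le>N. smult (a m) (P m))"
proof (induction N arbitrary: R)
  case 0
  hence R0: "R = [:coeff R 0:]" by (intro degree_0_id[symmetric]) simp
  have P0: "P 0 = [:coeff (P 0) 0:]" using deg[of 0] by (intro degree_0_id[symmetric]) simp
  have c0: "coeff (P 0) 0 \<noteq> 0" using lc[of 0] deg[of 0] by simp
  have "smult (coeff R 0 / coeff (P 0) 0) (P 0) = [:coeff R 0:]"
    by (subst P0) (use c0 in simp)
  hence "R = smult (coeff R 0 / coeff (P 0) 0) (P 0)" using R0 by simp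
  thus ?case by (intro exI[of _ "\<lambda>_. coeff R 0 / coeff (P 0) 0"]) simp
next
  case (Suc N)
  define b where "b = coeff R (Suc N) / lead_coeff (P (Suc N))"
  define R' where "R' = R - smult b (P (Suc N))"
  have "degree R' \<le> N"
  proof (rule degree_le)
    show "\<forall>i>N. coeff R' i = 0"
    proof (intro allI impI)
      fix i assume "N < i"
      show "coeff R' i = 0"
      proof (cases "i = Suc N")
        case True thus ?thesis unfolding R'_def b_def using lc[of "Suc N"] deg[of "Suc N"] by simp
      next
        case False hence "Suc N < i" using \<open>N < i\<close> by simp
        thus ?thesis unfolding R'_def using Suc.prems deg[of "Suc N"] by (simp add: coeff_eq_0)
      qed
    qed
  qed
  then obtain a where a: "R' = (\<Sum>m\<le>N. smult (a m) (P m))" using Suc.IH by blast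
  have "(\<Sum>m\<le>Suc N. smult ((a(Suc N := b)) m) (P m)) = (\<Sum>m\<le>N. smult ((a(Suc N := b)) m) (P m)) + smult b (P (Suc N))"
    by (simp add: sum.atMost_Suc)
  also have "(\<Sum>m\<le>N. smult ((a(Suc N := b)) m) (P m)) = R'"
    unfolding a by (intro sum.cong) auto
  also have "R' + smult b (P (Suc N)) = R" unfolding R'_def by simp
  finally have "R = (\<Sum>m\<le>Suc N. smult ((a(Suc N := b)) m) (P m))" by simp
  thus ?case by blast
qed

lemma W_pos: "0 < (q::real) \<Longrightarrow> 0 < q powr (1/2::real)" by simp

lemma bet0: "0 < (q::real) \<Longrightarrow> bet q 0 = 1" unfolding bet_def by simp
lemma bet1: "0 < (q::real) \<Longrightarrow> bet q (Suc 0) = 1/(q*q powr (1/2))"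
  using bet_Suc[of q 0] bet0 by simp
lemma bet2: "0 < (q::real) \<Longrightarrow> bet q (Suc (Suc 0)) = 1/(q^4 * q powr (1/2) * q powr (1/2))"
  using bet_Suc[of q "Suc 0"] bet1[of q] by (simp add: field_simps power4_eq_xxxx power2_eq_square)

lemma p32: "0 < (q::real) \<Longrightarrow> q powr (-3/2) = 1/(q*q powr (1/2))"
proof -
  assume q0: "0 < q"
  have "q powr (-3/2) = 1 / q powr (real 0 + 1 + 1/2)" by (simp add: powr_minus_divide[symmetric])
  also have "\<dots> = 1/(q*q powr (1/2))" using powr_split[OF q0, of 0] by simp
  finally show ?thesis .
qed
lemma p12: "0 < (q::real) \<Longrightarrow> q powr (-1/2) = 1/(q powr (1/2))"
  by (simp add: powr_minus_divide[symmetric])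
lemma p2: "0 < (q::real) \<Longrightarrow> q powr (-2) = 1/(q*q)"
  by (simp add: powr_minus_divide powr_realpow[of q 2, simplified] power2_eq_square)

lemma smom1: "0 < q \<Longrightarrow> smom p q (Suc 0) = (1-p)/(q*q)"
  unfolding smom_def qpoch_def using p2[of q] by (simp add: power2_eq_square)
lemma smom0: "0 < q \<Longrightarrow> smom p q 0 = (1/q powr (1/2))*(1 - BB q (Suc 0)/AA p q (Suc 0))"
  unfolding smom_def AA_def BB_def using p12[of q] by simp

lemma lstep:
  fixes p q :: real and lam :: "nat \<Rightarrow> real"
  assumes q0: "0 < q"
  and ldef: "lam = (\<lambda>n. Delta p q (n - 2) * Delta p q n / (Delta p q (n - 1))\<^sup>2
                        * (1 - q ^ (n - 1)) * (1 - p * q ^ (n - 1)) * q powr (- 4 * real (n - 1)))"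
  shows "lam (Suc (Suc m)) = Delta p q m * Delta p q (Suc (Suc m)) / (Delta p q (Suc m))^2 * (1-q*q^m)*(1-p*q*q^m)*(1/((q^m)^4*q^4))"
proof -
  have e: "q powr (- 4 * real (Suc m)) = 1/((q^m)^4*q^4)"
  proof -
    have "q powr (- 4 * real (Suc m)) = 1 / q powr (real (4 * Suc m))"
      by (simp add: powr_minus_divide[symmetric])
    also have "\<dots> = 1 / q^(4 * Suc m)" using q0 by (simp only: powr_realpow)
    also have "q^(4 * Suc m) = (q^m)^4*q^4" by (simp add: power_mult[symmetric] power_add[symmetric] mult.commute)
    finally show ?thesis .
  qed
  have d1: "Suc (Suc m) - 1 = Suc m" by simp
  have d2: "Suc (Suc m) - 2 = m" by simp
  show ?thesis unfolding ldef by (simp only: d1 d2 e power_Suc mult.assoc)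
qed

lemma hY2:
  fixes p q :: real assumes q0: "0 < q"
  shows "TT p q (Suc (Suc t)) (Suc (Suc j)) =
    (smom p q (Suc j)*(1-p*q^(Suc j))/(q^(Suc j)*q*q powr (1/2))) * ((1-1/q^(Suc j))*gg q t (Suc j)) * (-((-1)^(Suc t + 1)))
    * (bet q (Suc t)/(q^(Suc t)*q^(Suc t)*q*q powr (1/2)))
    * (1/(q*q^(Suc j)) - (AA p q (Suc (Suc t)) - p * BB q (Suc (Suc t)))/Delta p q (Suc (Suc t)))"
proof -
  have b: "bet q (Suc (Suc t)) = bet q (Suc t)/(q^(Suc t)*q^(Suc t)*q*q powr (1/2))"
    unfolding bet_Suc[OF q0, of "Suc t"] by (simp add: mult_2 power_add)
  have g: "gg q (Suc t) (Suc (Suc j)) = (1-1/q^(Suc j))*gg q t (Suc j)"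
    using gg_Suc_Suc[of q t "Suc j"] q0 by simp
  have s: "smom p q (Suc (Suc j)) = smom p q (Suc j)*(1-p*q^(Suc j))/(q^(Suc j)*q*q powr (1/2))"
    using smom_Suc[OF q0, of "Suc j"] by simp
  have sg: "(-1::real)^(Suc (Suc t) + 1) = -((-1)^(Suc t + 1))" by simp
  have qq: "q^(Suc (Suc j)) = q*q^(Suc j)" by simp
  have z: "(Suc (Suc t) = 0) = False" "(Suc (Suc j) = 0) = False" by simp_all
  show ?thesis by (simp only: TT_def z if_False diff_Suc_1 b g sg s qq)
qed

lemma hY3:
  fixes p q :: real assumes q0: "0 < q"
  shows "TT p q (Suc (Suc t)) (Suc j) =
    smom p q (Suc j) * (gg q t (Suc j) * (1 - q^(Suc t)/q^(Suc j))) * (-((-1)^(Suc t + 1)))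
    * (bet q (Suc t)/(q^(Suc t)*q^(Suc t)*q*q powr (1/2)))
    * (1/q^(Suc j) - (AA p q (Suc (Suc t)) - p * BB q (Suc (Suc t)))/Delta p q (Suc (Suc t)))"
proof -
  have b: "bet q (Suc (Suc t)) = bet q (Suc t)/(q^(Suc t)*q^(Suc t)*q*q powr (1/2))"
    unfolding bet_Suc[OF q0, of "Suc t"] by (simp add: mult_2 power_add)
  have g: "gg q (Suc t) (Suc j) = gg q t (Suc j) * (1 - q^(Suc t)/q^(Suc j))"
    by (rule gg_Suc)
  have sg: "(-1::real)^(Suc (Suc t) + 1) = -((-1)^(Suc t + 1))" by simp
  have z: "(Suc (Suc t) = 0) = False" "(Suc j = 0) = False" by simp_all
  show ?thesis by (simp only: TT_def z if_False diff_Suc_1 b g sg)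
qed

lemma hY4:
  fixes p q :: real
  shows "TT p q (Suc t) (Suc j) =
    smom p q (Suc j) * gg q t (Suc j) * (-1)^(Suc t + 1) * bet q (Suc t)
    * (1/q^(Suc j) - (AA p q (Suc t) - p * BB q (Suc t))/Delta p q (Suc t))"
proof -
  have z: "(Suc t = 0) = False" "(Suc j = 0) = False" by simp_all
  show ?thesis by (simp only: TT_def z if_False diff_Suc_1)
qed

lemma step5:
  fixes p q :: real and c lam :: "nat \<Rightarrow> real"
  assumes q0: "0 < q" and q1: "q < 1" and p0: "0 \<le> p" and p1: "p < 1"
  and cdef: "c = (\<lambda>n. if n = 1 then qpoch_inf p q / Delta p q 1 * q powr (-3/2)
                       else ((1 - q ^ n) * qpoch_inf (p * q ^ (n - 1)) q
                               - (1 - p * q ^ n) * qpoch_inf (q ^ (n - 1)) q)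
                            * q powr (- 2 * real (n - 1) - 3/2) / ((1 - q) * Delta p q n)
                          - ((1 - q ^ (n - 1)) * qpoch_inf (p * q ^ (n - 2)) q
                               - (1 - p * q ^ (n - 1)) * qpoch_inf (q ^ (n - 2)) q)
                            * q powr (- 2 * real (n - 1) + 1/2) / ((1 - q) * Delta p q (n - 1)))"
  and ldef: "lam = (\<lambda>n. Delta p q (n - 2) * Delta p q n / (Delta p q (n - 1))\<^sup>2
                        * (1 - q ^ (n - 1)) * (1 - p * q ^ (n - 1)) * q powr (- 4 * real (n - 1)))"
  shows "TT p q (Suc (Suc (Suc t))) (Suc j) = TT p q (Suc (Suc t)) (Suc (Suc j))
     - c (Suc (Suc (Suc t))) * TT p q (Suc (Suc t)) (Suc j) - lam (Suc (Suc (Suc t))) * TT p q (Suc t) (Suc j)"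
proof -
  let ?W = "q powr (1/2)"
  let ?Q = "q^(Suc t)"
  have W0: "?W \<noteq> 0" using q0 by simp
  have qW: "q = ?W * ?W" using W_sq[OF q0] by simp
  have Q0: "?Q \<noteq> 0" "q^(Suc j) \<noteq> 0" "1 - q \<noteq> 0" using q0 q1 by auto
  have AB: "AA p q (Suc (Suc t)) = (1-p*q*?Q)*AA p q (Suc (Suc (Suc t)))"
           "BB q (Suc (Suc t)) = (1-q*?Q)*BB q (Suc (Suc (Suc t)))"
           "AA p q (Suc t) = (1-p*?Q)*AA p q (Suc (Suc t))"
           "BB q (Suc t) = (1-?Q)*BB q (Suc (Suc t))"
    using AA_Suc[OF q0 q1, of p "Suc (Suc t)"] BB_Suc[OF q0 q1, of "Suc (Suc t)"]
          AA_Suc[OF q0 q1, of p "Suc t"] BB_Suc[OF q0 q1, of "Suc t"]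
    by (simp_all only: power_Suc[of q "Suc t"] mult.assoc)
  have D: "Delta p q (Suc (Suc (Suc t))) \<noteq> 0" "Delta p q (Suc (Suc t)) \<noteq> 0" "Delta p q (Suc t) \<noteq> 0"
    using Delta_pos[OF q0 q1 p0 p1] by (simp_all add: less_imp_neq[symmetric])
  show ?thesis
    unfolding hX[OF q0, where t=t and j=j] hY2[OF q0, where t=t and j=j] hY3[OF q0, where t=t and j=j] hY4[where t=t and j=j] cstep[OF q0 cdef, where m="Suc t"] lstep[OF q0 ldef, where m="Suc t"]
    by (rule alg5[OF qW W0 Q0 AB Delta_AB Delta_AB Delta_AB refl refl refl D])
qed

context
  fixes p q :: real and c lam :: "nat \<Rightarrow> real"
  assumes q0: "0 < q" and q1: "q < 1" and p0: "0 \<le> p" and p1: "p < 1"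
  and cdef: "c = (\<lambda>n. if n = 1 then qpoch_inf p q / Delta p q 1 * q powr (-3/2)
                       else ((1 - q ^ n) * qpoch_inf (p * q ^ (n - 1)) q
                               - (1 - p * q ^ n) * qpoch_inf (q ^ (n - 1)) q)
                            * q powr (- 2 * real (n - 1) - 3/2) / ((1 - q) * Delta p q n)
                          - ((1 - q ^ (n - 1)) * qpoch_inf (p * q ^ (n - 2)) q
                               - (1 - p * q ^ (n - 1)) * qpoch_inf (q ^ (n - 2)) q)
                            * q powr (- 2 * real (n - 1) + 1/2) / ((1 - q) * Delta p q (n - 1)))"
  and ldef: "lam = (\<lambda>n. Delta p q (n - 2) * Delta p q n / (Delta p q (n - 1))\<^sup>2
                        * (1 - q ^ (n - 1)) * (1 - p * q ^ (n - 1)) * q powr (- 4 * real (n - 1)))"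
begin

lemma qW': "q = q powr (1/2) * q powr (1/2)" using W_sq[OF q0] by simp
lemma W0': "q powr (1/2) \<noteq> 0" using q0 by simp
lemma Dnz: "Delta p q n \<noteq> 0" using Delta_pos[OF q0 q1 p0 p1, of n] by simp

lemma AA0: "AA p q 0 = (1-p) * AA p q (Suc 0)" using AA_Suc[OF q0 q1, of p 0] by simp
lemma AA1: "AA p q (Suc 0) = (1-p*q) * AA p q (Suc (Suc 0))" using AA_Suc[OF q0 q1, of p "Suc 0"] by simp
lemma BB1: "BB q (Suc 0) = (1-q) * BB q (Suc (Suc 0))" using BB_Suc[OF q0 q1, of "Suc 0"] by simp
lemma BB0: "BB q 0 = 0" using BB_Suc[OF q0 q1, of 0] by simp
lemma AApos: "AA p q (Suc 0) \<noteq> 0"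
proof -
  have "AA p q (Suc 0) = Delta p q (Suc 0) + BB q (Suc 0)" by (simp add: Delta_AB)
  moreover have "0 \<le> BB q (Suc 0)" unfolding BB_def
  proof (rule qpi_nonneg[OF q0 q1])
    fix k have "q^(Suc k) \<le> 1" using q0 q1 by (intro power_le_one) auto
    thus "0 \<le> 1 - q ^ Suc 0 * q ^ k" by simp
  qed
  ultimately show ?thesis using Delta_pos[OF q0 q1 p0 p1, of "Suc 0"] by simp
qed

lemma c1: "c (Suc 0) = AA p q 0 / Delta p q (Suc 0) * (1/(q*q powr (1/2)))"
  unfolding cdef AA_def using p32[OF q0] by simp

lemma base0: "smom p q (Suc 0) - c (Suc 0) * smom p q 0 = 0"
  unfolding c1 smom1[OF q0] smom0[OF q0]
  by (rule alg0[OF qW' W0' AApos Dnz AA0 Delta_AB])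

lemma base1: "smom p q (Suc (Suc j)) - c (Suc 0) * smom p q (Suc j) = TT p q (Suc 0) (Suc j)"
proof -
  have t: "TT p q (Suc 0) (Suc j) = smom p q (Suc j) * (1/(q*q powr (1/2))) * (1/q^(Suc j) - (AA p q (Suc 0) - p*BB q (Suc 0))/Delta p q (Suc 0))"
    unfolding TT_def using bet1[OF q0] by (simp add: gg_def)
  have s: "smom p q (Suc (Suc j)) = smom p q (Suc j)*(1-p*q^(Suc j))/(q^(Suc j)*q*q powr (1/2))"
    using smom_Suc[OF q0, of "Suc j"] by simp
  show ?thesis unfolding t s c1
    by (rule alg1[OF qW' W0' _ Dnz AA0 Delta_AB]) (use q0 in simp)
qed

lemma TT_base: "TT p q (Suc 0) k = smom p q (Suc k) - c (Suc 0) * smom p q k"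
proof (cases k)
  case 0 thus ?thesis using base0 by (simp add: TT_def)
next
  case (Suc j) thus ?thesis using base1[of j] by simp
qed

lemma step2: "TT p q (Suc (Suc 0)) 0 = TT p q (Suc 0) (Suc 0) - c (Suc (Suc 0)) * TT p q (Suc 0) 0 - lam (Suc (Suc 0)) * TT p q 0 0"
proof -
  have t: "TT p q (Suc 0) (Suc 0) = (1-p)/(q*q) * (1/(q*q powr (1/2))) * (1/q - (AA p q (Suc 0) - p*BB q (Suc 0))/Delta p q (Suc 0))"
    unfolding TT_def using bet1[OF q0] smom1[OF q0] by (simp add: gg_def)
  have l: "lam (Suc (Suc 0)) = Delta p q 0 * Delta p q (Suc (Suc 0)) / (Delta p q (Suc 0))^2 * (1-q)*(1-p*q)*(1/q^4)"
    using lstep[OF q0 ldef, of 0] by simp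
  have "TT p q (Suc 0) (Suc 0) = lam (Suc (Suc 0)) * smom p q 0"
    unfolding t l smom0[OF q0]
    by (rule alg2[OF qW' W0' AApos Dnz Dnz AA1 BB1 AA0 Delta_AB Delta_AB]) (simp add: Delta_AB BB0)
  thus ?thesis by (simp add: TT_def)
qed

lemma step3: "TT p q (Suc (Suc 0)) (Suc j) = TT p q (Suc 0) (Suc (Suc j)) - c (Suc (Suc 0)) * TT p q (Suc 0) (Suc j) - lam (Suc (Suc 0)) * TT p q 0 (Suc j)"
proof -
  let ?W = "q powr (1/2)" let ?U = "q^(Suc j)" let ?s = "smom p q (Suc j)"
  have g1: "TT p q (Suc (Suc 0)) (Suc j) = ?s*(1 - q/?U)*(-1)*(1/(q^4*?W*?W))*(1/?U - (AA p q (Suc (Suc 0))-p*BB q (Suc (Suc 0)))/Delta p q (Suc (Suc 0)))"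
    unfolding TT_def using bet2[OF q0] by (simp add: gg_def)
  have g2: "TT p q (Suc 0) (Suc (Suc j)) = (?s*(1-p*?U)/(?U*q*?W))*(1/(q*?W))*(1/(q*?U) - (AA p q (Suc 0)-p*BB q (Suc 0))/Delta p q (Suc 0))"
    unfolding TT_def using bet1[OF q0] smom_Suc[OF q0, of "Suc j" p] by (simp add: gg_def)
  have g3: "TT p q (Suc 0) (Suc j) = ?s*(1/(q*?W))*(1/?U - (AA p q (Suc 0)-p*BB q (Suc 0))/Delta p q (Suc 0))"
    unfolding TT_def using bet1[OF q0] by (simp add: gg_def)
  have g4: "TT p q 0 (Suc j) = ?s" unfolding TT_def by simp
  have cc: "c (Suc (Suc 0)) = ((1-q*q)*AA p q (Suc 0) - (1-p*q*q)*BB q (Suc 0))*(1/(q^3*?W))/((1-q)*Delta p q (Suc (Suc 0)))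
      - ((1-q)*AA p q 0 - (1-p*q)*BB q 0)*(1/(q*?W))/((1-q)*Delta p q (Suc 0))"
    using cstep[OF q0 cdef, of 0] by simp
  have l: "lam (Suc (Suc 0)) = Delta p q 0 * Delta p q (Suc (Suc 0)) / (Delta p q (Suc 0))^2 * (1-q)*(1-p*q)*(1/q^4)"
    using lstep[OF q0 ldef, of 0] by simp
  show ?thesis unfolding g1 g2 g3 g4 cc l
    by (rule alg3[OF qW' W0' _ _ Dnz Dnz AA1 BB1 AA0 BB0 Delta_AB Delta_AB Delta_AB]) (use q0 q1 in simp_all)
qed

lemma step4: "TT p q (Suc (Suc (Suc t))) 0 = TT p q (Suc (Suc t)) (Suc 0) - c (Suc (Suc (Suc t))) * TT p q (Suc (Suc t)) 0 - lam (Suc (Suc (Suc t))) * TT p q (Suc t) 0"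
proof -
  have "gg q (Suc t) (Suc 0) = 0" using q0 by (intro gg_zero) auto
  thus ?thesis by (simp add: TT_def)
qed

lemma TT_rec: "TT p q (Suc (Suc m)) k = TT p q (Suc m) (Suc k) - c (Suc (Suc m)) * TT p q (Suc m) k - lam (Suc (Suc m)) * TT p q m k"
proof (cases m)
  case 0 thus ?thesis using step2 step3 by (cases k) auto
next
  case (Suc t) thus ?thesis using step4 step5[OF q0 q1 p0 p1 cdef ldef] by (cases k) auto
qed

end

fun Qp :: "(nat \<Rightarrow> real) \<Rightarrow> (nat \<Rightarrow> real) \<Rightarrow> nat \<Rightarrow> real poly" where
  "Qp c l 0 = 1"
| "Qp c l (Suc 0) = [:- c 1, 1:]"
| "Qp c l (Suc (Suc m)) = [:- c (Suc (Suc m)), 1:] * Qp c l (Suc m) - smult (l (Suc (Suc m))) (Qp c l m)"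

lemma Qp_monic: "degree (Qp c l n) = n \<and> coeff (Qp c l n) n = 1"
proof (induction c l n rule: Qp.induct)
  case (3 c l m)
  let ?A = "Qp c l (Suc m)" let ?B = "Qp c l m"
  have e: "[:- c (Suc (Suc m)), 1:] * ?A = smult (- c (Suc (Suc m))) ?A + pCons 0 ?A"
    by (simp add: mult_pCons_left)
  have d: "degree (Qp c l (Suc (Suc m))) \<le> Suc (Suc m)"
    using 3 by (auto intro!: degree_diff_le degree_add_le order.trans[OF degree_smult_le]
      simp: e degree_pCons_eq_if)
  have cf: "coeff (Qp c l (Suc (Suc m))) (Suc (Suc m)) = 1"
    using 3 by (simp add: e coeff_eq_0)
  have "degree (Qp c l (Suc (Suc m))) = Suc (Suc m)"
    using d cf by (metis le_antisym le_degree zero_neq_one)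
  thus ?case using cf by simp
qed auto

lemma TT_zero: assumes "0 < (q::real)" "k < n" shows "TT p q n k = 0"
proof (cases "k = 0")
  case True thus ?thesis using assms by (simp add: TT_def)
next
  case False
  hence "gg q (n - 1) k = 0" using assms by (intro gg_zero) auto
  thus ?thesis using assms by (simp add: TT_def)
qed

theorem main5:
  fixes p q :: real and P :: "nat \<Rightarrow> real poly" and c lam :: "nat \<Rightarrow> real" and pm :: "nat \<Rightarrow> real poly"
  assumes q0: "0 < q" and q1: "q < 1" and p0: "0 \<le> p" and p1: "p < 1"
    and deg: "\<And>n. degree (P n) = n"
    and lead: "\<And>n. lead_coeff (P n) > 0"
    and orth: "\<And>m n. momL p q (P m * P n) = (if m = n then 1 else 0)"
  and cdef: "c = (\<lambda>n. if n = 1 then qpoch_inf p q / Delta p q 1 * q powr (-3/2)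
                       else ((1 - q ^ n) * qpoch_inf (p * q ^ (n - 1)) q
                               - (1 - p * q ^ n) * qpoch_inf (q ^ (n - 1)) q)
                            * q powr (- 2 * real (n - 1) - 3/2) / ((1 - q) * Delta p q n)
                          - ((1 - q ^ (n - 1)) * qpoch_inf (p * q ^ (n - 2)) q
                               - (1 - p * q ^ (n - 1)) * qpoch_inf (q ^ (n - 2)) q)
                            * q powr (- 2 * real (n - 1) + 1/2) / ((1 - q) * Delta p q (n - 1)))"
  and ldef: "lam = (\<lambda>n. Delta p q (n - 2) * Delta p q n / (Delta p q (n - 1))\<^sup>2
                        * (1 - q ^ (n - 1)) * (1 - p * q ^ (n - 1)) * q powr (- 4 * real (n - 1)))"
  and pmdef: "pm = (\<lambda>n. smult (1 / lead_coeff (P n)) (P n))"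
  shows "pm 0 = 1 \<and> pm 1 = [:- c 1, 1:] * pm 0 \<and>
            (\<forall>n\<ge>1. pm (n + 1) = [:- c (n + 1), 1:] * pm n - smult (lam (n + 1)) (pm (n - 1)))"
proof -
  note TTr = TT_rec[OF q0 q1 p0 p1 cdef ldef]
  note TTb = TT_base[OF q0 q1 p0 p1 cdef ldef]
  have TTQ2: "(\<forall>k. momL p q (monom 1 k * Qp c lam n) = TT p q n k) \<and>
              (\<forall>k. momL p q (monom 1 k * Qp c lam (Suc n)) = TT p q (Suc n) k)" for n
  proof (induction n)
    case 0
    have a: "\<forall>k. momL p q (monom 1 k * Qp c lam 0) = TT p q 0 k" by (simp add: momL_monom TT_def)
    have b: "\<forall>k. momL p q (monom 1 k * Qp c lam (Suc 0)) = TT p q (Suc 0) k"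
    proof
      fix k
      have "monom 1 k * [:- c 1, 1:] = monom 1 k * ([:- c 1, 1:] * 1 - smult 0 0)" by simp
      hence "momL p q (monom 1 k * [:- c 1, 1:]) = momL p q (monom 1 (Suc k)) - c 1 * momL p q (monom 1 k)"
        using momL_shift[of p q k "c 1" 1 0 0] by simp
      thus "momL p q (monom 1 k * Qp c lam (Suc 0)) = TT p q (Suc 0) k"
        using TTb[of k] by (simp add: momL_monom)
    qed
    show ?case using a b by simp
  next
    case (Suc n)
    have "\<forall>k. momL p q (monom 1 k * Qp c lam (Suc (Suc n))) = TT p q (Suc (Suc n)) k"
    proof
      fix k
      show "momL p q (monom 1 k * Qp c lam (Suc (Suc n))) = TT p q (Suc (Suc n)) k"
      proof -
        have "momL p q (monom 1 k * Qp c lam (Suc (Suc n))) = momL p q (monom 1 (Suc k) * Qp c lam (Suc n))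
           - c (Suc (Suc n)) * momL p q (monom 1 k * Qp c lam (Suc n)) - lam (Suc (Suc n)) * momL p q (monom 1 k * Qp c lam n)"
          by (simp only: Qp.simps momL_shift)
        thus ?thesis using Suc.IH TTr[of n k] by simp
      qed
    qed
    thus ?case using Suc.IH by simp
  qed
  hence TTQ: "\<And>n k. momL p q (monom 1 k * Qp c lam n) = TT p q n k" by blast
  have Qorth: "momL p q (R * Qp c lam n) = 0" if "degree R < n" for R n
    by (rule orth_monoms[OF _ that]) (simp add: TTQ TT_zero[OF q0])
  have lc0: "\<And>n. lead_coeff (P n) \<noteq> 0" using lead by (metis less_irrefl)
  have Porth: "momL p q (R * P n) = 0" if Rn: "degree R < n" for R n
  proof -
    have "degree R \<le> n - 1" using Rn by simp
    then obtain a where a: "R = (\<Sum>m\<le>n - 1. smult (a m) (P m))"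
      using span[OF deg lc0, of R "n - 1"] by blast
    have "R * P n = (\<Sum>m\<le>n - 1. smult (a m) (P m * P n))"
      unfolding a by (simp add: sum_distrib_right)
    hence "momL p q (R * P n) = (\<Sum>m\<le>n - 1. a m * momL p q (P m * P n))"
      by (simp add: momL_sum momL_smult)
    also have "\<dots> = 0" using Rn by (intro sum.neutral) (auto simp: orth)
    finally show ?thesis .
  qed
  have pmQ: "pm n = Qp c lam n" for n
  proof -
    define D where "D = pm n - Qp c lam n"
    have pmd: "degree (pm n) = n" "coeff (pm n) n = 1"
      unfolding pmdef using deg[of n] lc0[of n] by auto
    have Qd: "degree (Qp c lam n) = n" "coeff (Qp c lam n) n = 1" using Qp_monic by auto
    have Ddeg: "degree D \<le> n - 1"
    proof (rule degree_le, intro allI impI)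
      fix i assume "n - 1 < i"
      hence "i = n \<or> n < i" by auto
      thus "coeff D i = 0" unfolding D_def using pmd Qd by (auto simp: coeff_eq_0)
    qed
    obtain a where a: "D = (\<Sum>m\<le>n - 1. smult (a m) (P m))"
      using span[OF deg lc0 Ddeg] by blast
    have "a j = 0" if j: "j \<le> n - 1" for j
    proof -
      have "momL p q (P j * D) = (\<Sum>m\<le>n - 1. a m * momL p q (P j * P m))"
        unfolding a by (simp add: sum_distrib_left momL_sum momL_smult mult_smult_right)
      also have "\<dots> = (\<Sum>m\<le>n - 1. if m = j then a m else 0)"
        by (intro sum.cong) (auto simp: orth)
      also have "\<dots> = a j" using j by simp
      finally have e: "momL p q (P j * D) = a j" .
      show ?thesis
      proof (cases "n = 0")
        case True
        hence "D = 0" using Ddeg unfolding D_def using pmd Qd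
          by (metis coeff_diff degree_0_id diff_self le_zero_eq pCons_0_0 zero_diff)
        thus ?thesis using e by (simp add: momL_zero)
      next
        case False
        hence jn: "degree (P j) < n" using j deg by auto
        have "momL p q (P j * D) = momL p q (P j * pm n) - momL p q (P j * Qp c lam n)"
          unfolding D_def by (simp add: right_diff_distrib momL_diff)
        also have "momL p q (P j * pm n) = 0" unfolding pmdef
          using Porth[OF jn] by (simp add: mult_smult_right momL_smult)
        also have "momL p q (P j * Qp c lam n) = 0" by (rule Qorth[OF jn])
        finally show ?thesis using e by simp
      qed
    qed
    hence "D = 0" unfolding a by simp
    thus ?thesis unfolding D_def by simp
  qed
  show ?thesis
  proof (intro conjI allI impI)
    show "pm 0 = 1" using pmQ[of 0] by simp
    show "pm 1 = [:- c 1, 1:] * pm 0" using pmQ[of 0] pmQ[of 1] by simp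
    fix n :: nat assume "1 \<le> n"
    then obtain m where m: "n = Suc m" by (cases n) auto
    show "pm (n + 1) = [:- c (n + 1), 1:] * pm n - smult (lam (n + 1)) (pm (n - 1))"
      unfolding m pmQ by simp
  qed
qed

theorem theorem5:
  fixes p q :: real and P :: "nat \<Rightarrow> real poly"
  assumes "0 < q" "q < 1" "0 \<le> p" "p < 1"
    and deg: "\<And>n. degree (P n) = n"
    and lead: "\<And>n. lead_coeff (P n) > 0"
    and orth: "\<And>m n. momL p q (P m * P n) = (if m = n then 1 else 0)"
  shows "let pm = (\<lambda>n. smult (1 / lead_coeff (P n)) (P n));
             c = (\<lambda>n. if n = 1 then qpoch_inf p q / Delta p q 1 * q powr (-3/2)
                       else ((1 - q ^ n) * qpoch_inf (p * q ^ (n - 1)) q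
                               - (1 - p * q ^ n) * qpoch_inf (q ^ (n - 1)) q)
                            * q powr (- 2 * real (n - 1) - 3/2) / ((1 - q) * Delta p q n)
                          - ((1 - q ^ (n - 1)) * qpoch_inf (p * q ^ (n - 2)) q
                               - (1 - p * q ^ (n - 1)) * qpoch_inf (q ^ (n - 2)) q)
                            * q powr (- 2 * real (n - 1) + 1/2) / ((1 - q) * Delta p q (n - 1)));
             lam = (\<lambda>n. Delta p q (n - 2) * Delta p q n / (Delta p q (n - 1))\<^sup>2
                        * (1 - q ^ (n - 1)) * (1 - p * q ^ (n - 1)) * q powr (- 4 * real (n - 1)))
         in pm 0 = 1 \<and> pm 1 = [:- c 1, 1:] * pm 0 \<and>
            (\<forall>n\<ge>1. pm (n + 1) = [:- c (n + 1), 1:] * pm n - smult (lam (n + 1)) (pm (n - 1)))"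
    unfolding Let_def by (rule main5[OF assms refl refl refl])

end
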